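(* Let $V$ be a reflexive Banach space, $(X_n)_{n\in\mathbb N}$ Banach spaces and $Y$ a Banach space as in the definition below, and let $(V_n)_{n\in\mathbb N}$ be a non-conforming approximation of $V$ with respect to $(X_n)_{n\in\mathbb N}$ and $Y$. Suppose: - $A_n:X_n\to X_n^*$, $n\in\mathbb N$, is non-conforming pseudo-monotone with respect to $(V_n)$ and $A:V\to V^*$; - $B_n:X_n\to X_n^*$, $n\in\mathbb N$, is non-conforming pseudo-monotone with respect to $(V_n)$ and $B:V\to V^*$. Then $A_n+B_n:X_n\to X_n^*$, $n\in\mathbb N$, is non-conforming pseudo-monotone with respect to $(V_n)$ and $A+B:V\to V^*$.
   Context: Non-conforming approximation. Let $V$ be a reflexive Banach space and $(X_n)_{n\in\mathbb N}$ Banach spaces with $V\subseteq X_n$ and $\|\cdot\|_V=\|\cdot\|_{X_n}$ on $V$ for all $n$. Let $Y$ be a Banach space with $X_n\subseteq Y$ for all $n$. A sequence of reflexive Banach spaces $V_n\subseteq X_n$ is called a non-conforming approximation of $V$ with respect to $(X_n)$ and $Y$ if: - (NC.1) there is a dense subset $D\subseteq V$ such that for every $v\in D$ there exist $v_n\in V_n$ with $\|v_n-v\|_{X_n}\to0$; - (NC.2) for each sequence $v_n\in V_{m_n}$, where $(m_n)\subseteq\mathbb N$ with $m_n\to\infty$, the bound $\sup_n\|v_n\|_{X_{m_n}}<\infty$ implies that there exist a subsequence $(v_{n_\ell})$ and $v\in V$ with $v_{n_\ell}\rightharpoonup v$ weakly in $Y$. Non-conforming pseudo-monotonicity. Operators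 $A_n:X_n\to X_n^*$ are called non-conforming pseudo-monotone with respect to $(V_n)$ and $A:V\to V^*$ if the following holds. For each sequence $v_n\in V_{m_n}$ with $m_n\to\infty$ such that - $\sup_n\|v_n\|_{X_{m_n}}<\infty$, - $v_n\rightharpoonup v$ weakly in $Y$ (by (NC.2), such $v$ lies in $V$), and - $\limsup_n\langle A_{m_n}v_n,v_n-v\rangle_{X_{m_n}}\le0$, it follows that $\langle Av,v-z\rangle_V\le\liminf_n\langle A_{m_n}v_n,v_n-z\rangle_{X_{m_n}}$ for all $z\in V$. *)

theory Defs
  imports "HOL-Analysis.Analysis"
begin

text \<open>All spaces are real and embedded (as sets) in the ambient Banach space Y,
  modelled as a type 'y of class banach. A subspace S of Y carrying its own
  norm nrm is represented by the pair (S, nrm). Functionals on S are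
  represented by functions 'y \<Rightarrow> real (only their values on S matter).\<close>

definition is_norm_on :: "'y::real_vector set \<Rightarrow> ('y \<Rightarrow> real) \<Rightarrow> bool" where
  "is_norm_on S nrm \<longleftrightarrow>
     (\<forall>x\<in>S. 0 \<le> nrm x) \<and> (\<forall>x\<in>S. nrm x = 0 \<longleftrightarrow> x = 0) \<and>
     (\<forall>c. \<forall>x\<in>S. nrm (c *\<^sub>R x) = \<bar>c\<bar> * nrm x) \<and>
     (\<forall>x\<in>S. \<forall>y\<in>S. nrm (x + y) \<le> nrm x + nrm y)"

definition banach_space_on :: "'y::real_vector set \<Rightarrow> ('y \<Rightarrow> real) \<Rightarrow> bool" where
  "banach_space_on S nrm \<longleftrightarrow> subspace S \<and> is_norm_on S nrm \<and>
     (\<forall>u::nat \<Rightarrow> 'y. (\<forall>n. u n \<in> S) \<and>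
        (\<forall>e>0. \<exists>N. \<forall>k\<ge>N. \<forall>l\<ge>N. nrm (u k - u l) < e)
        \<longrightarrow> (\<exists>x\<in>S. (\<lambda>n. nrm (u n - x)) \<longlonglongrightarrow> 0))"

definition dual_space :: "'y::real_vector set \<Rightarrow> ('y \<Rightarrow> real) \<Rightarrow> ('y \<Rightarrow> real) set" where
  "dual_space S nrm = {f.
     (\<forall>x\<in>S. \<forall>y\<in>S. f (x + y) = f x + f y) \<and>
     (\<forall>c. \<forall>x\<in>S. f (c *\<^sub>R x) = c * f x) \<and>
     (\<exists>C. \<forall>x\<in>S. \<bar>f x\<bar> \<le> C * nrm x)}"

definition dual_norm :: "'y::real_vector set \<Rightarrow> ('y \<Rightarrow> real) \<Rightarrow> ('y \<Rightarrow> real) \<Rightarrow> real" where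
  "dual_norm S nrm f = (SUP x\<in>{x\<in>S. nrm x \<le> 1}. \<bar>f x\<bar>)"

definition reflexive_on :: "'y::real_vector set \<Rightarrow> ('y \<Rightarrow> real) \<Rightarrow> bool" where
  "reflexive_on S nrm \<longleftrightarrow>
     (\<forall>\<Phi> :: ('y \<Rightarrow> real) \<Rightarrow> real.
        (\<forall>f\<in>dual_space S nrm. \<forall>g\<in>dual_space S nrm. \<Phi> (\<lambda>x. f x + g x) = \<Phi> f + \<Phi> g) \<and>
        (\<forall>c. \<forall>f\<in>dual_space S nrm. \<Phi> (\<lambda>x. c * f x) = c * \<Phi> f) \<and>
        (\<exists>C. \<forall>f\<in>dual_space S nrm. \<bar>\<Phi> f\<bar> \<le> C * dual_norm S nrm f)
      \<longrightarrow> (\<exists>x\<in>S. \<forall>f\<in>dual_space S nrm. \<Phi> f = f x))"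

definition reflexive_banach_on :: "'y::real_vector set \<Rightarrow> ('y \<Rightarrow> real) \<Rightarrow> bool" where
  "reflexive_banach_on S nrm \<longleftrightarrow> banach_space_on S nrm \<and> reflexive_on S nrm"

definition weakly_conv :: "(nat \<Rightarrow> 'y::real_normed_vector) \<Rightarrow> 'y \<Rightarrow> bool" where
  "weakly_conv u x \<longleftrightarrow>
     (\<forall>f :: 'y \<Rightarrow> real. bounded_linear f \<longrightarrow> (\<lambda>n. f (u n)) \<longlonglongrightarrow> f x)"

text \<open>Standing assumptions: V reflexive Banach, X_n Banach, V \<subseteq> X_n with equal norms on V
  (X_n \<subseteq> Y is automatic since all spaces live in the type 'y).\<close>
definition nc_setting :: "'y::banach set \<Rightarrow> ('y \<Rightarrow> real) \<Rightarrow> (nat \<Rightarrow> 'y set) \<Rightarrow> (nat \<Rightarrow> 'y \<Rightarrow> real) \<Rightarrow> bool" where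
  "nc_setting V nV X nX \<longleftrightarrow> reflexive_banach_on V nV \<and>
     (\<forall>n. banach_space_on (X n) (nX n) \<and> V \<subseteq> X n \<and> (\<forall>x\<in>V. nX n x = nV x))"

definition nc_approximation ::
  "'y::banach set \<Rightarrow> ('y \<Rightarrow> real) \<Rightarrow> (nat \<Rightarrow> 'y set) \<Rightarrow> (nat \<Rightarrow> 'y \<Rightarrow> real) \<Rightarrow> (nat \<Rightarrow> 'y set) \<Rightarrow> bool" where
  "nc_approximation V nV X nX Vn \<longleftrightarrow>
     (\<forall>n. Vn n \<subseteq> X n \<and> reflexive_banach_on (Vn n) (nX n)) \<and>
     (\<exists>D\<subseteq>V. (\<forall>x\<in>V. \<forall>e>0. \<exists>d\<in>D. nV (x - d) < e) \<and>
        (\<forall>d\<in>D. \<exists>w::nat \<Rightarrow> 'y. (\<forall>n. w n \<in> Vn n) \<and> (\<lambda>n. nX n (w n - d)) \<longlonglongrightarrow> 0)) \<and>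
     (\<forall>(m::nat \<Rightarrow> nat) (u::nat \<Rightarrow> 'y). filterlim m at_top sequentially \<and>
        (\<forall>n. u n \<in> Vn (m n)) \<and> (\<exists>C. \<forall>n. nX (m n) (u n) \<le> C) \<longrightarrow>
        (\<exists>r x. strict_mono r \<and> x \<in> V \<and> weakly_conv (u \<circ> r) x))"

text \<open>An operator is a map 'y \<Rightarrow> ('y \<Rightarrow> real); the duality pairing \<langle>A x, y\<rangle> is A x y.\<close>
definition nc_pseudo_monotone ::
  "'y::banach set \<Rightarrow> ('y \<Rightarrow> real) \<Rightarrow> (nat \<Rightarrow> 'y set) \<Rightarrow> (nat \<Rightarrow> 'y \<Rightarrow> real) \<Rightarrow> (nat \<Rightarrow> 'y set)
   \<Rightarrow> (nat \<Rightarrow> 'y \<Rightarrow> 'y \<Rightarrow> real) \<Rightarrow> ('y \<Rightarrow> 'y \<Rightarrow> real) \<Rightarrow> bool" where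
  "nc_pseudo_monotone V nV X nX Vn An A \<longleftrightarrow>
     (\<forall>n. \<forall>x\<in>X n. An n x \<in> dual_space (X n) (nX n)) \<and>
     (\<forall>x\<in>V. A x \<in> dual_space V nV) \<and>
     (\<forall>(m::nat \<Rightarrow> nat) (u::nat \<Rightarrow> 'y) v.
        filterlim m at_top sequentially \<and> (\<forall>n. u n \<in> Vn (m n)) \<and>
        (\<exists>C. \<forall>n. nX (m n) (u n) \<le> C) \<and> weakly_conv u v \<and> v \<in> V \<and>
        limsup (\<lambda>n. ereal (An (m n) (u n) (u n - v))) \<le> 0
        \<longrightarrow> (\<forall>z\<in>V. ereal (A v (v - z)) \<le> liminf (\<lambda>n. ereal (An (m n) (u n) (u n - z)))))"

end

theory Submission imports Defs begin
lemma limsup_le0_iff: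
  fixes x :: "nat \<Rightarrow> real"
  shows "limsup (\<lambda>n. ereal (x n)) \<le> 0 \<longleftrightarrow> (\<forall>e>0. eventually (\<lambda>n. x n < e) sequentially)"
proof
  assume h: "limsup (\<lambda>n. ereal (x n)) \<le> 0"
  show "\<forall>e>0. eventually (\<lambda>n. x n < e) sequentially"
  proof (intro allI impI)
    fix e :: real assume "e > 0"
    hence "ereal e > limsup (\<lambda>n. ereal (x n))" using h by (simp add: le_less_trans)
    from Limsup_lessD[OF this] show "eventually (\<lambda>n. x n < e) sequentially" by simp
  qed
next
  assume h: "\<forall>e>0. eventually (\<lambda>n. x n < e) sequentially"
  show "limsup (\<lambda>n. ereal (x n)) \<le> 0"
    unfolding Limsup_le_iff
  proof (intro allI impI)
    fix y :: ereal assume "y > 0"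
    then show "eventually (\<lambda>n. y > ereal (x n)) sequentially"
    proof (cases y)
      case (real r) then show ?thesis using h \<open>y>0\<close> by (auto elim: eventually_mono)
    qed auto
  qed
qed

lemma not_ev_subseq:
  fixes P :: "nat \<Rightarrow> bool"
  assumes "\<not> eventually P sequentially"
  shows "\<exists>r::nat\<Rightarrow>nat. strict_mono r \<and> (\<forall>n. \<not> P (r n))"
proof -
  have "infinite {n. \<not> P n}"
  proof
    assume "finite {n. \<not> P n}"
    then obtain N where N: "\<forall>n\<in>{n. \<not> P n}. n < N"
      using finite_nat_set_iff_bounded by blast
    have "\<forall>n\<ge>N. P n"
    proof (intro allI impI)
      fix n assume "n \<ge> N"
      show "P n"
      proof (rule ccontr)
        assume "\<not> P n"
        with N have "n < N" by blast
        with \<open>n \<ge> N\<close> show False by simp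
      qed
    qed
    hence "eventually P sequentially" unfolding eventually_sequentially by blast
    with assms show False by contradiction
  qed
  from infinite_enumerate[OF this] show ?thesis by auto
qed
lemma limsup_part:
  fixes V :: "'y::banach set" and nV :: "'y \<Rightarrow> real"
    and X :: "nat \<Rightarrow> 'y set" and nX :: "nat \<Rightarrow> 'y \<Rightarrow> real"
    and Vn :: "nat \<Rightarrow> 'y set"
    and An Bn :: "nat \<Rightarrow> 'y \<Rightarrow> 'y \<Rightarrow> real" and A B :: "'y \<Rightarrow> 'y \<Rightarrow> real"
    and m :: "nat \<Rightarrow> nat" and u :: "nat \<Rightarrow> 'y" and C :: real
  assumes PB: "nc_pseudo_monotone V nV X nX Vn Bn B"
    and m: "filterlim m at_top sequentially" and u: "\<forall>n. u n \<in> Vn (m n)"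
    and C: "\<forall>n. nX (m n) (u n) \<le> C" and w: "weakly_conv u v" and v: "v \<in> V"
    and s: "limsup (\<lambda>n. ereal (An (m n) (u n) (u n - v) + Bn (m n) (u n) (u n - v))) \<le> 0"
  shows "limsup (\<lambda>n. ereal (An (m n) (u n) (u n - v))) \<le> 0"
proof (rule ccontr)
  let ?a = "\<lambda>n. An (m n) (u n) (u n - v)"
  let ?b = "\<lambda>n. Bn (m n) (u n) (u n - v)"
  assume "\<not> ?thesis"
  then obtain e :: real where e: "e > 0" "\<not> eventually (\<lambda>n. ?a n < e) sequentially"
    unfolding limsup_le0_iff by blast
  from not_ev_subseq[OF e(2)] obtain r :: "nat \<Rightarrow> nat" where r: "strict_mono r" "\<forall>n. e \<le> ?a (r n)"
    by (auto simp: not_less)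
  have fr: "filterlim r sequentially sequentially" using r(1) by (rule filterlim_subseq)
  have "eventually (\<lambda>n. ?a n + ?b n < e/2) sequentially"
    using s[unfolded limsup_le0_iff, rule_format, of "e/2"] e(1) by simp
  hence ev: "eventually (\<lambda>n. ?a (r n) + ?b (r n) < e/2) sequentially"
    using eventually_compose_filterlim[OF _ fr] by blast
  hence evb: "eventually (\<lambda>n. ?b (r n) < - e/2) sequentially"
  proof (rule eventually_mono)
    fix n assume "?a (r n) + ?b (r n) < e/2"
    moreover have "e \<le> ?a (r n)" using r(2) by blast
    ultimately show "?b (r n) < - e/2" by linarith
  qed
  have lsb: "limsup (\<lambda>n. ereal (Bn ((m \<circ> r) n) ((u \<circ> r) n) ((u \<circ> r) n - v))) \<le> 0"
    unfolding limsup_le0_iff using evb e(1)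
    by (auto elim: eventually_mono)
  have mr: "filterlim (m \<circ> r) at_top sequentially"
    using filterlim_compose[OF m fr] by (simp add: comp_def)
  have wr: "weakly_conv (u \<circ> r) v"
    unfolding weakly_conv_def
  proof (intro allI impI)
    fix f :: "'y \<Rightarrow> real" assume bl: "bounded_linear f"
    have "(\<lambda>n. f (u n)) \<longlonglongrightarrow> f v" using w bl unfolding weakly_conv_def by blast
    from LIMSEQ_subseq_LIMSEQ[OF this r(1)] show "(\<lambda>n. f ((u \<circ> r) n)) \<longlonglongrightarrow> f v"
      by (simp add: comp_def)
  qed
  have "\<exists>C. \<forall>n. nX ((m \<circ> r) n) ((u \<circ> r) n) \<le> C" using C by auto
  moreover have "\<forall>n. (u \<circ> r) n \<in> Vn ((m \<circ> r) n)" using u by simp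
  ultimately have "\<forall>z\<in>V. ereal (B v (v - z)) \<le> liminf (\<lambda>n. ereal (Bn ((m \<circ> r) n) ((u \<circ> r) n) ((u \<circ> r) n - z)))"
    using PB[unfolded nc_pseudo_monotone_def, THEN conjunct2, THEN conjunct2, rule_format, of "m \<circ> r" "u \<circ> r" v] mr wr v lsb
    by blast
  hence le: "ereal (B v 0) \<le> liminf (\<lambda>n. ereal (?b (r n)))" using v by auto
  have "B v \<in> dual_space V nV" using PB v unfolding nc_pseudo_monotone_def by blast
  hence "B v (0 *\<^sub>R v) = 0 * B v v" using v unfolding dual_space_def by blast
  hence "B v 0 = 0" by simp
  with le have le0: "ereal 0 \<le> liminf (\<lambda>n. ereal (?b (r n)))" by simp
  have "liminf (\<lambda>n. ereal (?b (r n))) \<le> ereal (- e/2)"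
    by (rule Liminf_le) (use evb in \<open>auto elim: eventually_mono\<close>)
  with le0 have "ereal 0 \<le> ereal (- e/2)" by (rule order_trans)
  thus False using e(1) by simp
qed

theorem lemma4p3:
  fixes V :: "'y::banach set" and nV :: "'y \<Rightarrow> real"
    and X :: "nat \<Rightarrow> 'y set" and nX :: "nat \<Rightarrow> 'y \<Rightarrow> real"
    and Vn :: "nat \<Rightarrow> 'y set"
    and An Bn :: "nat \<Rightarrow> 'y \<Rightarrow> 'y \<Rightarrow> real" and A B :: "'y \<Rightarrow> 'y \<Rightarrow> real"
  assumes "nc_setting V nV X nX"
    and "nc_approximation V nV X nX Vn"
    and PA: "nc_pseudo_monotone V nV X nX Vn An A"
    and PB: "nc_pseudo_monotone V nV X nX Vn Bn B"
  shows "nc_pseudo_monotone V nV X nX Vn (\<lambda>n x y. An n x y + Bn n x y) (\<lambda>x y. A x y + B x y)"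
proof -
  have dsum: "(\<lambda>y. f y + g y) \<in> dual_space S nrm"
    if "f \<in> dual_space S nrm" "g \<in> dual_space S nrm" for f g :: "'y \<Rightarrow> real" and S nrm
  proof -
    from that obtain C1 C2 where c1: "\<forall>x\<in>S. \<bar>f x\<bar> \<le> C1 * nrm x" and c2: "\<forall>x\<in>S. \<bar>g x\<bar> \<le> C2 * nrm x"
      unfolding dual_space_def by blast
    have "\<forall>x\<in>S. \<bar>f x + g x\<bar> \<le> (C1 + C2) * nrm x"
    proof
      fix x assume "x \<in> S"
      with c1 c2 have "\<bar>f x\<bar> \<le> C1 * nrm x" "\<bar>g x\<bar> \<le> C2 * nrm x" by auto
      thus "\<bar>f x + g x\<bar> \<le> (C1 + C2) * nrm x" by (simp add: distrib_right abs_triangle_ineq order_trans[OF abs_triangle_ineq])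
    qed
    hence "\<exists>C. \<forall>x\<in>S. \<bar>f x + g x\<bar> \<le> C * nrm x" by blast
    with that show ?thesis unfolding dual_space_def by (auto simp: algebra_simps)
  qed
  show ?thesis
    unfolding nc_pseudo_monotone_def
  proof (intro conjI allI impI ballI)
    fix n x assume "x \<in> X n"
    thus "(\<lambda>y. An n x y + Bn n x y) \<in> dual_space (X n) (nX n)"
      using PA[unfolded nc_pseudo_monotone_def, THEN conjunct1] PB[unfolded nc_pseudo_monotone_def, THEN conjunct1]
      by (intro dsum) auto
  next
    fix x assume "x \<in> V"
    thus "(\<lambda>y. A x y + B x y) \<in> dual_space V nV"
      using PA[unfolded nc_pseudo_monotone_def, THEN conjunct2, THEN conjunct1] PB[unfolded nc_pseudo_monotone_def, THEN conjunct2, THEN conjunct1]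
      by (intro dsum) auto
  next
    fix m :: "nat \<Rightarrow> nat" and u :: "nat \<Rightarrow> 'y" and v z
    assume h: "filterlim m at_top sequentially \<and> (\<forall>n. u n \<in> Vn (m n)) \<and>
        (\<exists>C. \<forall>n. nX (m n) (u n) \<le> C) \<and> weakly_conv u v \<and> v \<in> V \<and>
        limsup (\<lambda>n. ereal (An (m n) (u n) (u n - v) + Bn (m n) (u n) (u n - v))) \<le> 0"
      and z: "z \<in> V"
    then obtain C where m: "filterlim m at_top sequentially" and u: "\<forall>n. u n \<in> Vn (m n)"
      and C: "\<forall>n. nX (m n) (u n) \<le> C" and w: "weakly_conv u v" and v: "v \<in> V"
      and s: "limsup (\<lambda>n. ereal (An (m n) (u n) (u n - v) + Bn (m n) (u n) (u n - v))) \<le> 0"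
      by blast
    have la: "limsup (\<lambda>n. ereal (An (m n) (u n) (u n - v))) \<le> 0"
      by (rule limsup_part[where An=An and Bn=Bn, OF PB m u C w v s])
    have s': "limsup (\<lambda>n. ereal (Bn (m n) (u n) (u n - v) + An (m n) (u n) (u n - v))) \<le> 0"
      using s by (simp add: add.commute)
    have lb: "limsup (\<lambda>n. ereal (Bn (m n) (u n) (u n - v))) \<le> 0"
      by (rule limsup_part[where An=Bn and Bn=An, OF PA m u C w v s'])
    have ia: "ereal (A v (v - z)) \<le> liminf (\<lambda>n. ereal (An (m n) (u n) (u n - z)))"
    proof -
      have "\<exists>C. \<forall>n. nX (m n) (u n) \<le> C" using C by blast
      with PA[unfolded nc_pseudo_monotone_def, THEN conjunct2, THEN conjunct2, rule_format, of m u v] m u w v la z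
      show ?thesis by blast
    qed
    have ib: "ereal (B v (v - z)) \<le> liminf (\<lambda>n. ereal (Bn (m n) (u n) (u n - z)))"
    proof -
      have "\<exists>C. \<forall>n. nX (m n) (u n) \<le> C" using C by blast
      with PB[unfolded nc_pseudo_monotone_def, THEN conjunct2, THEN conjunct2, rule_format, of m u v] m u w v lb z
      show ?thesis by blast
    qed
    have "liminf (\<lambda>n. ereal (An (m n) (u n) (u n - z))) + liminf (\<lambda>n. ereal (Bn (m n) (u n) (u n - z)))
        \<le> liminf (\<lambda>n. ereal (An (m n) (u n) (u n - z)) + ereal (Bn (m n) (u n) (u n - z)))"
      by (rule ereal_liminf_add_mono) (use ia ib in auto)
    moreover have "ereal (A v (v - z) + B v (v - z)) \<le> liminf (\<lambda>n. ereal (An (m n) (u n) (u n - z))) + liminf (\<lambda>n. ereal (Bn (m n) (u n) (u n - z)))"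
      using add_mono[OF ia ib] by simp
    ultimately show "ereal (A v (v - z) + B v (v - z)) \<le> liminf (\<lambda>n. ereal (An (m n) (u n) (u n - z) + Bn (m n) (u n) (u n - z)))"
      by simp
  qed
qed

end
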